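(* Let $f\ge0$ be integrable on $[-\pi,\pi]$ with $\int f>0$, let $\sigma_n^2(f)=\min_{q\in\mathcal{Q}_n(1)}\int_{-\pi}^{\pi}|q(e^{i\lambda})|^2f(\lambda)\,d\lambda$ and $\sigma_n(f)=\sqrt{\sigma_n^2(f)}$. Then: (a) if $f(\lambda)>0$ for almost every $\lambda$ in some neighborhood of $0$, then $\lim_{n\to\infty}\sqrt[n]{\sigma_n(f)}=1$; (b) if $f(\lambda)=0$ for almost every $\lambda$ with $|\lambda|<\alpha$, where $0<\alpha<\pi$, then $\lim_{n\to\infty}\sqrt[n]{\sigma_n(f)}\le\cos(\alpha/2)$; in particular $\sigma_n(f)$ decreases at least exponentially.
   Context: $\mathcal{Q}_n(1)$ denotes the set of complex polynomials of degree at most $n$ with $q(1)=1$; $\sigma_n^2(f)$ is the variance of the best linear unbiased estimator of the constant mean $m$ of $X(t)=m+Y(t)$ from $X(0),\dots,X(n)$, where $Y$ is a centered stationary process with spectral density $f$. *)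

theory Defs
  imports "HOL-Analysis.Analysis" "HOL-Computational_Algebra.Polynomial"
begin

definition Qn1 :: "nat \<Rightarrow> complex poly set" where
  "Qn1 n = {q. degree q \<le> n \<and> poly q 1 = 1}"

text \<open>sigma_n^2(f) = min over q in Q_n(1) of the integral of |q(e^{i lambda})|^2 f(lambda)
  over [-pi,pi]. The minimum is attained; we write it as an infimum.\<close>
definition sigma_sq :: "nat \<Rightarrow> (real \<Rightarrow> real) \<Rightarrow> real" where
  "sigma_sq n f = (INF q \<in> Qn1 n. integral {-pi..pi} (\<lambda>x. (cmod (poly q (cis x)))^2 * f x))"

definition sigma :: "nat \<Rightarrow> (real \<Rightarrow> real) \<Rightarrow> real" where
  "sigma n f = sqrt (sigma_sq n f)"

end

theory Submission
  imports Defs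
begin





lemma lagrange_interp:
  fixes q :: "complex poly" and z :: "nat \<Rightarrow> complex" and S :: "nat set"
  assumes fin: "finite S" and inj: "inj_on z S" and deg: "degree q < card S"
  shows "poly q w = (\<Sum>j\<in>S. poly q (z j) * (\<Prod>k\<in>S-{j}. (w - z k) / (z j - z k)))"
proof -
  define Lp where "Lp = (\<Sum>j\<in>S. smult (poly q (z j) / (\<Prod>k\<in>S-{j}. (z j - z k))) (\<Prod>k\<in>S-{j}. [:- z k, 1:]))"
  have polyLp: "poly Lp x = (\<Sum>j\<in>S. poly q (z j) * (\<Prod>k\<in>S-{j}. (x - z k) / (z j - z k)))" for x
    unfolding Lp_def poly_sum poly_smult poly_prod
    by (intro sum.cong refl) (simp add: prod_dividef)
  have degLp: "degree Lp < card S"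
  proof -
    have "degree Lp \<le> card S - 1"
      unfolding Lp_def
    proof (intro degree_sum_le)
      fix j assume j: "j \<in> S"
      have "degree (\<Prod>k\<in>S-{j}. [:- z k, (1::complex):]) \<le> (\<Sum>k\<in>S-{j}. degree [:- z k, (1::complex):])"
        using degree_prod_sum_le[of "S-{j}" "\<lambda>k. [:- z k, (1::complex):]"] fin by (simp add: o_def)
      also have "\<dots> = card (S - {j})" by simp
      also have "\<dots> = card S - 1" using fin j by simp
      finally show "degree (smult (poly q (z j) / (\<Prod>k\<in>S-{j}. (z j - z k))) (\<Prod>k\<in>S-{j}. [:- z k, 1:])) \<le> card S - 1"
        by (meson degree_smult_le order_trans)
    qed (rule fin)
    moreover have "card S > 0" using deg by simp
    ultimately show ?thesis by linarith
  qed
  have agree: "poly q x = poly Lp x" if xS: "x \<in> z ` S" for x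
  proof -
    obtain i where i: "i \<in> S" "x = z i" using xS by auto
    have "poly Lp (z i) = (\<Sum>j\<in>S. poly q (z j) * (\<Prod>k\<in>S-{j}. (z i - z k) / (z j - z k)))"
      by (rule polyLp)
    also have "\<dots> = poly q (z i) * (\<Prod>k\<in>S-{i}. (z i - z k) / (z i - z k))"
    proof -
      have z0: "(\<Sum>j\<in>S-{i}. poly q (z j) * (\<Prod>k\<in>S-{j}. (z i - z k) / (z j - z k))) = 0"
      proof (rule sum.neutral, intro ballI)
        fix j assume j: "j \<in> S - {i}"
        have "(\<Prod>k\<in>S-{j}. (z i - z k) / (z j - z k)) = 0"
          using fin i j by (intro prod_zero bexI[of _ i]) auto
        then show "poly q (z j) * (\<Prod>k\<in>S-{j}. (z i - z k) / (z j - z k)) = 0" by simp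
      qed
      show ?thesis by (subst sum.remove[OF fin i(1)]) (use z0 in simp)
    qed
    also have "(\<Prod>k\<in>S-{i}. (z i - z k) / (z i - z k)) = 1"
    proof (rule prod.neutral, intro ballI)
      fix k assume k: "k \<in> S - {i}"
      have "z i \<noteq> z k" using inj i k by (auto dest: inj_onD)
      then show "(z i - z k) / (z i - z k) = 1" by simp
    qed
    finally show ?thesis using i by simp
  qed
  have "q = Lp"
  proof (rule poly_eqI_degree[of "z ` S"])
    show "\<And>x. x \<in> z ` S \<Longrightarrow> poly q x = poly Lp x" by (rule agree)
    show "degree q < card (z ` S)" using deg card_image[OF inj] by simp
    show "degree Lp < card (z ` S)" using degLp card_image[OF inj] by simp
  qed
  then have "poly q w = poly Lp w" by simp
  then show ?thesis by (simp only: polyLp)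
qed



definition nu :: "nat \<Rightarrow> nat \<Rightarrow> real" where
  "nu L k = (if k = L then 1 else \<bar>real k - real L\<bar>)"

lemma nu_ge1: "nu L k \<ge> 1"
  unfolding nu_def by auto

lemma prod_shift_fact: "(\<Prod>k\<in>{a<..a+n}. real (k - a)) = fact n"
proof -
  have "{a<..a+n} = (\<lambda>i. a + Suc i) ` {0..<n}"
  proof safe
    fix x assume "x \<in> {a<..a+n}"
    then show "x \<in> (\<lambda>i. a + Suc i) ` {0..<n}"
      by (intro image_eqI[of _ _ "x - a - 1"]) auto
  qed auto
  then have "(\<Prod>k\<in>{a<..a+n}. real (k - a)) = (\<Prod>i\<in>{0..<n}. real (a + Suc i - a))"
    by (simp add: prod.reindex inj_on_def)
  also have "\<dots> = (\<Prod>i\<in>{0..<n}. real (Suc i))" by simp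
  also have "\<dots> = fact n" by (simp add: fact_prod_Suc)
  finally show ?thesis .
qed

lemma prod_below_fact: "(\<Prod>k\<in>{0..<n}. real (n - k)) = fact n"
  by (simp add: fact_prod_rev)

lemma prod_shift_fact': "(\<Prod>k\<in>{a<..a+n}. real k - real a) = fact n"
  using prod_shift_fact[of a n] by (metis (no_types, lifting) greaterThanAtMost_iff less_imp_le_nat of_nat_diff prod.cong)

lemma prod_below_fact': "(\<Prod>k\<in>{0..<n}. real n - real k) = fact n"
  using prod_below_fact[of n] by (metis (no_types, lifting) atLeastLessThan_iff less_imp_le_nat of_nat_diff prod.cong)

lemma prod_nu_G: "(\<Prod>k\<in>{0..2*L}. nu L k) = fact L * fact L"
proof -
  have split: "{0..2*L} = {0..<L} \<union> ({L} \<union> {L<..L+L})" by auto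
  have "(\<Prod>k\<in>{0..2*L}. nu L k) = (\<Prod>k\<in>{0..<L}. nu L k) * ((\<Prod>k\<in>{L}. nu L k) * (\<Prod>k\<in>{L<..L+L}. nu L k))"
    unfolding split by (subst prod.union_disjoint; auto)+
  also have "(\<Prod>k\<in>{0..<L}. nu L k) = (\<Prod>k\<in>{0..<L}. real (L - k))"
    by (intro prod.cong) (auto simp: nu_def of_nat_diff)
  also have "(\<Prod>k\<in>{L<..L+L}. nu L k) = (\<Prod>k\<in>{L<..L+L}. real (k - L))"
    by (intro prod.cong) (auto simp: nu_def of_nat_diff)
  finally show ?thesis by (simp add: prod_shift_fact' prod_below_fact' nu_def)
qed

lemma prod_dist_G:
  assumes "j \<le> 2*L"
  shows "(\<Prod>k\<in>{0..2*L}-{j}. \<bar>real j - real k\<bar>) = fact j * fact (2*L - j)"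
proof -
  have split: "{0..2*L}-{j} = {0..<j} \<union> {j<..j + (2*L - j)}" using assms by auto
  have "(\<Prod>k\<in>{0..2*L}-{j}. \<bar>real j - real k\<bar>) = (\<Prod>k\<in>{0..<j}. \<bar>real j - real k\<bar>) * (\<Prod>k\<in>{j<..j + (2*L - j)}. \<bar>real j - real k\<bar>)"
    unfolding split by (subst prod.union_disjoint) auto
  also have "(\<Prod>k\<in>{0..<j}. \<bar>real j - real k\<bar>) = (\<Prod>k\<in>{0..<j}. real (j - k))"
    by (intro prod.cong) (auto simp: of_nat_diff)
  also have "(\<Prod>k\<in>{j<..j + (2*L - j)}. \<bar>real j - real k\<bar>) = (\<Prod>k\<in>{j<..j + (2*L - j)}. real (k - j))"
    by (intro prod.cong) (auto simp: of_nat_diff)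
  finally show ?thesis by (simp only: prod_shift_fact prod_below_fact)
qed

lemma fact_central:
  assumes "j \<le> 2*L"
  shows "(fact L * fact L :: real) \<le> fact j * fact (2*L - j)"
proof -
  have "real ((2*L) choose j) \<le> real ((2*L) choose L)"
    using binomial_maximum'[of L j] by simp
  then have "fact (2*L) / (fact j * fact (2*L - j)) \<le> (fact (2*L) / (fact L * fact (2*L - L)) :: real)"
    using binomial_fact[OF assms, where 'a=real] binomial_fact[of L "2*L", where 'a=real] by simp
  moreover have "2*L - L = L" by simp
  ultimately have "fact (2*L) / (fact j * fact (2*L - j)) \<le> (fact (2*L) / (fact L * fact L) :: real)"
    by simp
  moreover have "(fact (2*L) :: real) > 0" "(fact j * fact (2*L - j) :: real) > 0" "(fact L * fact L :: real) > 0"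
    by auto
  ultimately show ?thesis by (simp add: divide_le_cancel field_simps)
qed

lemma card_nu_le:
  assumes "\<And>k. k \<in> M \<Longrightarrow> nu L k \<le> V" and V0: "V \<ge> 0"
  shows "real (card M) \<le> 2 * V + 1"
proof -
  define V' where "V' = nat \<lfloor>V\<rfloor>"
  have "M \<subseteq> {L - V' .. L + V'}"
  proof
    fix k assume k: "k \<in> M"
    have "\<bar>real k - real L\<bar> \<le> V"
      using assms(1)[OF k] nu_ge1[of L k] by (cases "k = L") (auto simp: nu_def)
    then have "\<bar>int k - int L\<bar> \<le> \<lfloor>V\<rfloor>"
      by (metis floor_mono floor_of_int of_int_abs of_int_diff of_int_of_nat_eq)
    then show "k \<in> {L - V' .. L + V'}" unfolding V'_def by auto
  qed
  then have "card M \<le> card {L - V' .. L + V'}" by (rule card_mono[rotated]) simp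
  also have "\<dots> \<le> 2 * V' + 1" by simp
  finally have "real (card M) \<le> 2 * real V' + 1" by linarith
  moreover have "real V' \<le> V"
    using V0 unfolding V'_def by simp
  ultimately show ?thesis by linarith
qed

lemma nu_count:
  assumes "finite M"
  shows "fact (card M) \<le> 3 ^ card M * (\<Prod>k\<in>M. nu L k)"
  using assms
proof (induction "card M" arbitrary: M)
  case 0
  then show ?case by simp
next
  case (Suc c)
  then have ne: "M \<noteq> {}" by auto
  define V where "V = Max (nu L ` M)"
  have "V \<in> nu L ` M" unfolding V_def using Suc.prems ne by (intro Max_in) auto
  then obtain k0 where k0: "k0 \<in> M" "nu L k0 = V" by auto
  have Vge: "nu L k \<le> V" if "k \<in> M" for k
    unfolding V_def using Suc.prems that by (intro Max_ge) auto
  have V1: "V \<ge> 1" using nu_ge1[of L k0] k0 by simp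
  have "real (card M) \<le> 2 * V + 1" by (rule card_nu_le) (use Vge V1 in auto)
  then have cV: "real (Suc c) \<le> 3 * V" using Suc.hyps(2) V1 by simp
  have cM': "card (M - {k0}) = c" using Suc.hyps(2) k0 Suc.prems by simp
  have IH: "fact c \<le> 3 ^ c * (\<Prod>k\<in>M - {k0}. nu L k)"
    using Suc.hyps(1)[of "M - {k0}"] cM' Suc.prems by simp
  have pos: "(\<Prod>k\<in>M - {k0}. nu L k) \<ge> 0" by (intro prod_nonneg) (auto intro: order_trans[OF _ nu_ge1])
  have "fact (card M) = real (Suc c) * fact c" unfolding Suc.hyps(2)[symmetric] by (rule fact_Suc)
  also have "\<dots> \<le> (3 * V) * (3 ^ c * (\<Prod>k\<in>M - {k0}. nu L k))"
    by (intro mult_mono cV IH) (use V1 pos in auto)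
  also have "\<dots> = 3 ^ Suc c * (V * (\<Prod>k\<in>M - {k0}. nu L k))" by simp
  also have "V * (\<Prod>k\<in>M - {k0}. nu L k) = (\<Prod>k\<in>M. nu L k)"
    using prod.remove[OF Suc.prems k0(1), of "nu L"] k0 by simp
  finally show ?case using Suc.hyps(2) by simp
qed

lemma comb_bound:
  assumes S: "S \<subseteq> {0..2*L}" and j: "j \<in> S"
  shows "(\<Prod>k\<in>S-{j}. nu L k / \<bar>real j - real k\<bar>)
           \<le> (6 * real L) ^ card ({0..2*L} - S) / fact (card ({0..2*L} - S))"
proof -
  define G where "G = {0..2*L}"
  define M where "M = G - S"
  define m where "m = card M"
  have finG: "finite G" unfolding G_def by simp
  have jG: "j \<le> 2*L" using S j by auto
  have GS: "G - {j} = (S - {j}) \<union> M" "(S - {j}) \<inter> M = {}" using S j unfolding M_def G_def by auto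
  have finS: "finite (S - {j})" "finite M" using finG S unfolding M_def G_def by (auto intro: finite_subset)
  have jM: "j \<notin> M" using j unfolding M_def by auto
  have nupos: "nu L k > 0" for k using nu_ge1[of L k] by simp
  have dpos: "\<bar>real j - real k\<bar> > 0" if "k \<noteq> j" for k using that by simp
  define PS where "PS = (\<Prod>k\<in>S-{j}. nu L k)"
  define PM where "PM = (\<Prod>k\<in>M. nu L k)"
  define DS where "DS = (\<Prod>k\<in>S-{j}. \<bar>real j - real k\<bar>)"
  define DM where "DM = (\<Prod>k\<in>M. \<bar>real j - real k\<bar>)"
  have PSpos: "PS > 0" unfolding PS_def by (intro prod_pos) (use nupos in auto)
  have PMpos: "PM > 0" unfolding PM_def by (intro prod_pos) (use nupos in auto)
  have DSpos: "DS > 0" unfolding DS_def by (intro prod_pos) (use dpos in auto)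
  have DMpos: "DM > 0" unfolding DM_def by (intro prod_pos) (use dpos jM in auto)
  have "PS * PM = (\<Prod>k\<in>G-{j}. nu L k)"
    unfolding PS_def PM_def GS(1) by (rule prod.union_disjoint[symmetric]) (use finS GS in auto)
  also have "\<dots> \<le> nu L j * (\<Prod>k\<in>G-{j}. nu L k)"
    using nu_ge1[of L j] mult_right_mono[of 1 "nu L j" "(\<Prod>k\<in>G-{j}. nu L k)"]
    by (auto intro!: prod_nonneg less_imp_le[OF nupos])
  also have "\<dots> = (\<Prod>k\<in>G. nu L k)" using prod.remove[OF finG, of j "nu L"] jG unfolding G_def by simp
  also have "\<dots> = fact L * fact L" unfolding G_def by (rule prod_nu_G)
  finally have A1: "PS * PM \<le> fact L * fact L" .
  have "DS * DM = (\<Prod>k\<in>G-{j}. \<bar>real j - real k\<bar>)"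
    unfolding DS_def DM_def GS(1) by (rule prod.union_disjoint[symmetric]) (use finS GS in auto)
  also have "\<dots> = fact j * fact (2*L - j)" unfolding G_def by (rule prod_dist_G[OF jG])
  finally have A2: "DS * DM = fact j * fact (2*L - j)" .
  have "(\<Prod>k\<in>S-{j}. nu L k / \<bar>real j - real k\<bar>) = PS / DS"
    unfolding PS_def DS_def by (rule prod_dividef)
  also have "\<dots> = (PS * PM) * DM / (PM * (DS * DM))" using PMpos DMpos by (simp add: field_simps)
  also have "\<dots> \<le> (fact L * fact L) * DM / (PM * (fact j * fact (2*L - j)))"
    unfolding A2 using A1 DMpos PMpos by (intro divide_right_mono mult_right_mono) auto
  also have "\<dots> \<le> (fact j * fact (2*L - j)) * DM / (PM * (fact j * fact (2*L - j)))"
    using fact_central[OF jG] DMpos PMpos by (intro divide_right_mono mult_right_mono) auto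
  also have "\<dots> = DM / PM" by simp
  also have "\<dots> \<le> (2 * real L) ^ m / (fact m / 3 ^ m)"
  proof (rule frac_le)
    show "0 \<le> (2 * real L) ^ m" by simp
    have "DM \<le> (\<Prod>k\<in>M. 2 * real L)" unfolding DM_def
    proof (rule prod_mono, safe)
      fix k assume "k \<in> M"
      then have "k \<le> 2*L" unfolding M_def G_def by auto
      then show "\<bar>real j - real k\<bar> \<le> 2 * real L" using jG by linarith
    qed simp
    then show "DM \<le> (2 * real L) ^ m" unfolding m_def by simp
    show "0 < (fact m / 3 ^ m :: real)" by simp
    show "(fact m / 3 ^ m :: real) \<le> PM" using nu_count[OF finS(2), of L] unfolding PM_def m_def
      by (simp add: field_simps)
  qed
  also have "\<dots> = (6 * real L) ^ m / fact m"
  proof -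
    have "(6 * real L) ^ m = ((2 * real L) * 3) ^ m" by simp
    also have "\<dots> = (2 * real L) ^ m * 3 ^ m" by (rule power_mult_distrib)
    finally have e: "(6 * real L) ^ m = (2 * real L) ^ m * 3 ^ m" .
    show ?thesis unfolding e by simp
  qed
  finally show ?thesis unfolding m_def M_def G_def .
qed



lemma cmod_cis_diff: "cmod (cis a - cis b) = 2 * \<bar>sin ((a - b) / 2)\<bar>"
proof -
  define t where "t = a - b"
  have "cis a - cis b = cis b * (cis t - 1)" unfolding t_def by (simp add: right_diff_distrib cis_mult)
  then have "cmod (cis a - cis b) = cmod (cis t - 1)" by (simp add: norm_mult)
  also have "cmod (cis t - 1) = sqrt ((cos t - 1)^2 + (sin t)^2)"
    by (simp add: cmod_def)
  also have "(cos t - 1)^2 + (sin t)^2 = (2 * sin (t/2))^2"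
  proof -
    have "cos t = 1 - 2 * (sin (t/2))^2" using cos_double_sin[of "t/2"] by simp
    moreover have "(cos t)^2 + (sin t)^2 = 1" by simp
    ultimately show ?thesis by (simp add: power2_eq_square algebra_simps)
  qed
  also have "sqrt ((2 * sin (t/2))^2) = 2 * \<bar>sin (t/2)\<bar>" by (simp only: real_sqrt_abs abs_mult)
  finally show ?thesis unfolding t_def .
qed

lemma cmod_cis_diff_le: "cmod (cis a - cis b) \<le> \<bar>a - b\<bar>"
  using abs_sin_x_le_abs_x[of "(a-b)/2"] unfolding cmod_cis_diff by simp

lemma cos_lower: "cos (x::real) \<ge> 1 - x^2 / 2"
proof -
  have "cos x = 1 - 2 * (sin (x/2))^2" using cos_double_sin[of "x/2"] by simp
  moreover have "(sin (x/2))^2 \<le> (x/2)^2"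
    using abs_sin_x_le_abs_x[of "x/2"] by (metis abs_ge_zero power2_abs power_mono)
  ultimately show ?thesis by (simp add: power_divide)
qed

lemma sin_ge_x_cos:
  fixes x :: real
  assumes "0 \<le> x" "x \<le> pi"
  shows "x * cos x \<le> sin x"
proof -
  define g where "g y = sin y - y * cos y" for y :: real
  have "g 0 \<le> g x"
  proof (rule DERIV_nonneg_imp_nondecreasing[OF assms(1)])
    fix y assume y: "0 \<le> y" "y \<le> x"
    have "DERIV g y :> y * sin y"
      unfolding g_def by (auto intro!: derivative_eq_intros simp: algebra_simps)
    moreover have "y * sin y \<ge> 0" using y assms sin_ge_zero[of y] by simp
    ultimately show "\<exists>d. DERIV g y :> d \<and> d \<ge> 0" by blast
  qed
  then show ?thesis unfolding g_def by simp
qed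

lemma cmod_cis_diff_ge:
  assumes "\<bar>a - b\<bar> \<le> 2 * pi"
  shows "cmod (cis a - cis b) \<ge> \<bar>a - b\<bar> * (1 - (a - b)^2 / 8)"
proof -
  define x where "x = \<bar>a - b\<bar> / 2"
  have x: "0 \<le> x" "x \<le> pi" using assms unfolding x_def by auto
  have "x * (1 - x^2/2) \<le> x * cos x" using cos_lower[of x] x by (intro mult_left_mono) auto
  also have "\<dots> \<le> sin x" by (rule sin_ge_x_cos[OF x])
  also have "sin x = \<bar>sin ((a - b)/2)\<bar>"
  proof -
    have "sin x \<ge> 0" using sin_ge_zero[OF x] .
    moreover have "sin x = sin ((a-b)/2) \<or> sin x = - sin ((a-b)/2)"
      unfolding x_def using sin_minus[of "(a-b)/2"] by (cases "a - b \<ge> 0") (auto simp: abs_if minus_divide_left)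
    ultimately show ?thesis by auto
  qed
  finally have "x * (1 - x^2/2) \<le> \<bar>sin ((a - b)/2)\<bar>" .
  moreover have "x^2 = (a-b)^2/4" unfolding x_def by (simp add: power_divide)
  ultimately show ?thesis unfolding cmod_cis_diff x_def by (simp add: field_simps)
qed



lemma remez_nodes:
  fixes q :: "complex poly" and y :: "nat \<Rightarrow> real"
  assumes S: "S \<subseteq> {0..2*L}" and degS: "degree q < card S"
    and h: "h > 0" and w: "0 \<le> w" "w < 1/2" and c: "c > 0"
    and near: "\<And>k. k \<in> S \<Longrightarrow> \<bar>y k - (real k - real L) * h\<bar> \<le> w * h"
    and chord: "\<And>j k. j \<in> S \<Longrightarrow> k \<in> S \<Longrightarrow> cmod (cis (y j) - cis (y k)) \<ge> c * \<bar>y j - y k\<bar>"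
    and bnd: "\<And>k. k \<in> S \<Longrightarrow> cmod (poly q (cis (y k))) \<le> B"
    and beta: "(1 + w) / (c * (1 - 2*w)) \<ge> 1"
  shows "cmod (poly q 1) \<le> real (card S) * B * (((1 + w) / (c * (1 - 2*w)))^(2*L)
            * ((6 * real L) ^ card ({0..2*L} - S) / fact (card ({0..2*L} - S))))"
proof -
  define \<beta> where "\<beta> = (1 + w) / (c * (1 - 2*w))"
  define z where "z k = cis (y k)" for k
  define Cb where "Cb = (6 * real L) ^ card ({0..2*L} - S) / fact (card ({0..2*L} - S))"
  define \<Lambda> where "\<Lambda> = \<beta>^(2*L) * Cb"
  have finS: "finite S" using S finite_subset by blast
  have sep: "\<bar>y j - y k\<bar> \<ge> (1 - 2*w) * \<bar>real j - real k\<bar> * h" if "j \<in> S" "k \<in> S" "j \<noteq> k" for j k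
  proof -
    have d1: "\<bar>real j - real k\<bar> \<ge> 1" using that(3) by linarith
    have "\<bar>(real j - real L) * h - (real k - real L) * h\<bar> = \<bar>real j - real k\<bar> * h"
    proof -
      have e: "(real j - real L) * h - (real k - real L) * h = (real j - real k) * h" by (simp add: algebra_simps)
      show ?thesis by (simp only: e abs_mult abs_of_pos[OF h])
    qed
    then have "\<bar>y j - y k\<bar> \<ge> \<bar>real j - real k\<bar> * h - 2 * (w * h)"
      using near[OF that(1)] near[OF that(2)] by linarith
    moreover have "\<bar>real j - real k\<bar> * h - 2 * (w * h) \<ge> (1 - 2*w) * \<bar>real j - real k\<bar> * h"
    proof -
      have "2 * w * h \<le> 2 * w * h * \<bar>real j - real k\<bar>"
        using d1 w h mult_left_mono[of 1 "\<bar>real j - real k\<bar>" "2*w*h"] by simp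
      then show ?thesis by (simp add: algebra_simps)
    qed
    ultimately show ?thesis by linarith
  qed
  have dz: "cmod (z j - z k) \<ge> c * ((1 - 2*w) * \<bar>real j - real k\<bar> * h)" if "j \<in> S" "k \<in> S" "j \<noteq> k" for j k
    using chord[OF that(1,2)] sep[OF that] c unfolding z_def
    by (meson mult_left_mono less_imp_le order_trans)
  have dzpos: "cmod (z j - z k) > 0" if "j \<in> S" "k \<in> S" "j \<noteq> k" for j k
  proof -
    have "c * ((1 - 2*w) * \<bar>real j - real k\<bar> * h) > 0" using c w h that(3) by simp
    then show ?thesis using dz[OF that] by linarith
  qed
  have inj: "inj_on z S"
    by (rule inj_onI) (use dzpos in force)
  have lag: "poly q 1 = (\<Sum>j\<in>S. poly q (z j) * (\<Prod>k\<in>S-{j}. (1 - z k) / (z j - z k)))"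
    by (rule lagrange_interp[OF finS inj degS])
  have cardS: "card S \<le> 2*L + 1" using card_mono[OF _ S] by simp
  have \<beta>1: "\<beta> \<ge> 1" using beta unfolding \<beta>_def .
  have fac: "cmod ((1 - z k) / (z j - z k)) \<le> \<beta> * (nu L k / \<bar>real j - real k\<bar>)"
    if "j \<in> S" "k \<in> S" "j \<noteq> k" for j k
  proof -
    have num: "cmod (1 - z k) \<le> (1 + w) * h * nu L k"
    proof -
      have "cmod (1 - z k) = cmod (cis 0 - cis (y k))" unfolding z_def by simp
      also have "\<dots> \<le> \<bar>0 - y k\<bar>" by (rule cmod_cis_diff_le)
      also have "\<dots> \<le> (1 + w) * h * nu L k"
      proof (cases "k = L")
        case True
        have a: "\<bar>y k\<bar> \<le> w * h" using near[OF that(2)] True by simp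
        have b: "w * h \<le> (1 + w) * h" using h by (intro mult_right_mono) auto
        have n1: "nu L k = 1" using True by (simp add: nu_def)
        show ?thesis using a b n1 by (metis diff_0 abs_minus_cancel mult_1_right order_trans)
      next
        case False
        then have k1: "\<bar>real k - real L\<bar> \<ge> 1" by linarith
        have "\<bar>y k\<bar> \<le> \<bar>real k - real L\<bar> * h + w * h"
        proof -
          have "\<bar>(real k - real L) * h\<bar> = \<bar>real k - real L\<bar> * h" using h by (simp add: abs_mult)
          then show ?thesis using near[OF that(2)] by linarith
        qed
        also have "\<dots> \<le> \<bar>real k - real L\<bar> * h + w * h * \<bar>real k - real L\<bar>"
          using k1 w h mult_left_mono[of 1 "\<bar>real k - real L\<bar>" "w*h"] by simp
        finally show ?thesis using False by (simp add: nu_def algebra_simps)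
      qed
      finally show ?thesis .
    qed
    have den: "cmod (z j - z k) \<ge> c * (1 - 2*w) * \<bar>real j - real k\<bar> * h"
      using dz[OF that] by (simp add: algebra_simps)
    have denpos: "c * (1 - 2*w) * \<bar>real j - real k\<bar> * h > 0" using c w h that(3) by simp
    have "cmod ((1 - z k) / (z j - z k)) = cmod (1 - z k) / cmod (z j - z k)" by (simp add: norm_divide)
    also have "\<dots> \<le> ((1 + w) * h * nu L k) / (c * (1 - 2*w) * \<bar>real j - real k\<bar> * h)"
      by (rule frac_le) (use num den denpos h w nu_ge1[of L k] in auto)
    also have "\<dots> = (h * ((1 + w) * nu L k)) / (h * (c * (1 - 2*w) * \<bar>real j - real k\<bar>))"
      by (simp add: ac_simps)
    also have "\<dots> = ((1 + w) * nu L k) / (c * (1 - 2*w) * \<bar>real j - real k\<bar>)"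
      using h by (intro mult_divide_mult_cancel_left) simp
    also have "\<dots> = \<beta> * (nu L k / \<bar>real j - real k\<bar>)"
      unfolding \<beta>_def by simp
    finally show ?thesis .
  qed
  have lam: "cmod (\<Prod>k\<in>S-{j}. (1 - z k) / (z j - z k)) \<le> \<Lambda>" if j: "j \<in> S" for j
  proof -
    have "cmod (\<Prod>k\<in>S-{j}. (1 - z k) / (z j - z k)) = (\<Prod>k\<in>S-{j}. cmod ((1 - z k) / (z j - z k)))"
      by (rule prod_norm[symmetric])
    also have "\<dots> \<le> (\<Prod>k\<in>S-{j}. \<beta> * (nu L k / \<bar>real j - real k\<bar>))"
      by (intro prod_mono) (use fac j in auto)
    also have "\<dots> = \<beta> ^ card (S - {j}) * (\<Prod>k\<in>S-{j}. nu L k / \<bar>real j - real k\<bar>)"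
      by (simp only: prod.distrib prod_constant)
    also have "\<dots> \<le> \<beta> ^ (2*L) * Cb"
    proof (rule mult_mono)
      have "card (S - {j}) \<le> 2*L" using cardS j finS by simp
      then show "\<beta> ^ card (S - {j}) \<le> \<beta> ^ (2*L)" using \<beta>1 by (intro power_increasing) auto
      show "(\<Prod>k\<in>S-{j}. nu L k / \<bar>real j - real k\<bar>) \<le> Cb"
        unfolding Cb_def by (rule comb_bound[OF S j])
      show "0 \<le> \<beta> ^ (2*L)" using \<beta>1 by simp
      show "0 \<le> (\<Prod>k\<in>S-{j}. nu L k / \<bar>real j - real k\<bar>)"
        by (intro prod_nonneg) (auto intro: order_trans[OF _ nu_ge1])
    qed
    finally show ?thesis unfolding \<Lambda>_def .
  qed
  have "cmod (poly q 1) \<le> (\<Sum>j\<in>S. cmod (poly q (z j) * (\<Prod>k\<in>S-{j}. (1 - z k) / (z j - z k))))"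
    unfolding lag by (rule norm_sum)
  also have "\<dots> \<le> (\<Sum>j\<in>S. B * \<Lambda>)"
  proof (rule sum_mono)
    fix j assume j: "j \<in> S"
    have B0: "0 \<le> B" using bnd[OF j] by (meson norm_ge_zero order_trans)
    have "cmod (poly q (z j) * (\<Prod>k\<in>S-{j}. (1 - z k) / (z j - z k))) =
          cmod (poly q (z j)) * cmod (\<Prod>k\<in>S-{j}. (1 - z k) / (z j - z k))" by (rule norm_mult)
    also have "\<dots> \<le> B * \<Lambda>"
      by (intro mult_mono) (use bnd[OF j] lam[OF j] B0 in \<open>auto simp: z_def\<close>)
    finally show "cmod (poly q (z j) * (\<Prod>k\<in>S-{j}. (1 - z k) / (z j - z k))) \<le> B * \<Lambda>" .
  qed
  also have "\<dots> = real (card S) * B * \<Lambda>" by simp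
  finally show ?thesis unfolding \<Lambda>_def Cb_def \<beta>_def by simp
qed




lemma x_pow_fact_le_exp:
  fixes x :: real assumes "0 \<le> x" shows "x ^ m / fact m \<le> exp x"
proof -
  have s: "(\<lambda>n. x^n /\<^sub>R fact n) sums exp x" by (rule exp_converges)
  have "(\<Sum>n\<in>{m}. x^n /\<^sub>R fact n) \<le> suminf (\<lambda>n. x^n /\<^sub>R fact n)"
    by (rule sum_le_suminf) (use s assms in \<open>auto simp: sums_iff\<close>)
  then show ?thesis using s by (simp add: sums_iff divide_inverse_commute)
qed

lemma comb_exp:
  assumes th: "0 < \<theta>" "\<theta> \<le> 6" and m: "real m \<le> \<theta> * real L"
  shows "(6 * real L) ^ m / fact m \<le> (6/\<theta>) powr (\<theta> * real L) * exp (\<theta> * real L)"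
proof -
  have "(6 * real L) ^ m = ((6/\<theta>) * (\<theta> * real L)) ^ m" using th by simp
  also have "\<dots> = (6/\<theta>)^m * (\<theta> * real L) ^ m" by (rule power_mult_distrib)
  finally have e: "(6 * real L) ^ m / fact m = (6/\<theta>)^m * ((\<theta> * real L) ^ m / fact m)" by simp
  have "(6/\<theta>)^m = (6/\<theta>) powr (real m)" using th by (simp add: powr_realpow)
  also have "\<dots> \<le> (6/\<theta>) powr (\<theta> * real L)" using th m by (intro powr_mono) auto
  finally have a: "(6/\<theta>)^m \<le> (6/\<theta>) powr (\<theta> * real L)" .
  have b: "(\<theta> * real L) ^ m / fact m \<le> exp (\<theta> * real L)" using th by (intro x_pow_fact_le_exp) simp
  show ?thesis unfolding e by (intro mult_mono a b) (use th in auto)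
qed

lemma core:
  fixes f :: "real \<Rightarrow> real" and q :: "complex poly"
  assumes nonneg: "\<And>x. x \<in> {-pi..pi} \<Longrightarrow> f x \<ge> 0"
    and int: "f integrable_on {-pi..pi}"
    and dl: "0 < \<delta>" "\<delta> \<le> 1"
    and w: "0 < w" "w < 1/2"
    and ep: "\<epsilon> > 0"
    and rho: "measure lebesgue {x \<in> {-\<delta>..\<delta>}. f x \<le> \<epsilon>} \<le> \<rho>"
    and L: "L \<ge> 1"
    and degq: "degree q \<le> L" and q1: "poly q 1 = 1"
    and th: "0 < \<theta>" "\<theta> \<le> 1"
    and small: "\<rho> * (real L + 1) \<le> w * \<delta> * \<theta> * real L"
    and Tq: "Tq > 0" "integral {-pi..pi} (\<lambda>x. (cmod (poly q (cis x)))^2 * f x) \<le> \<epsilon> * Tq * \<rho>"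
  shows "1 \<le> (2 * real L + 1) * sqrt Tq * (((1 + w) / ((1 - \<delta>^2/2) * (1 - 2*w)))^(2*L)
              * ((6/\<theta>) powr (\<theta> * real L) * exp (\<theta> * real L)))"
proof -
  define g where "g x = (cmod (poly q (cis x)))^2" for x
  define I where "I = integral {-pi..pi} (\<lambda>x. g x * f x)"
  have I_le: "I \<le> \<epsilon> * Tq * \<rho>" using Tq(2) unfolding I_def g_def .
  have gcont: "continuous_on UNIV g" unfolding g_def cis_conv_exp by (intro continuous_intros)
  have gmeas[measurable]: "g \<in> borel_measurable lebesgue"
    using continuous_imp_measurable_on_sets_lebesgue[OF gcont] by (simp add: lebesgue_on_UNIV_eq)
  define f' where "f' x = indicator {-pi..pi} x *\<^sub>R f x" for x
  have f'meas[measurable]: "f' \<in> borel_measurable lebesgue"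
    using integrable_imp_measurable[OF int] unfolding f'_def
    by (subst (asm) borel_measurable_restrict_space_iff) auto
  have dpi: "{-\<delta>..\<delta>} \<subseteq> {-pi..pi}" using dl pi_gt3 by auto
  have f'eq: "f' x = f x" if "x \<in> {-\<delta>..\<delta>}" for x using dpi that unfolding f'_def by auto
  define A where "A = {x \<in> {-\<delta>..\<delta>}. \<epsilon> < f x \<and> Tq < g x}"
  define D where "D = {x \<in> {-\<delta>..\<delta>}. f x \<le> \<epsilon>}"
  define E' where "E' = {x \<in> {-\<delta>..\<delta>}. \<epsilon> < f x \<and> g x \<le> Tq}"
  have Aeq: "A = {-\<delta>..\<delta>} \<inter> {x \<in> space lebesgue. \<epsilon> < f' x \<and> Tq < g x}"
    unfolding A_def using f'eq by auto
  have Deq: "D = {-\<delta>..\<delta>} \<inter> {x \<in> space lebesgue. f' x \<le> \<epsilon>}"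
    unfolding D_def using f'eq by auto
  have Asets: "A \<in> sets lebesgue" unfolding Aeq by (intro sets.Int) (simp, measurable)
  have Dsets: "D \<in> sets lebesgue" unfolding Deq by (intro sets.Int) (simp, measurable)
  have Icc_lm: "{-\<delta>..\<delta>} \<in> lmeasurable" by simp
  have Alm: "A \<in> lmeasurable" by (rule fmeasurableI2[OF Icc_lm _ Asets]) (auto simp: A_def)
  have Dlm: "D \<in> lmeasurable" by (rule fmeasurableI2[OF Icc_lm _ Dsets]) (auto simp: D_def)
  have fabs: "f absolutely_integrable_on {-pi..pi}"
    by (rule nonnegative_absolutely_integrable_1[OF int]) (use nonneg in auto)
  have gfint: "(\<lambda>x. g x * f x) integrable_on {-pi..pi}"
  proof -
    have "(\<lambda>x. g x * f x) absolutely_integrable_on {-pi..pi}"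
    proof (rule absolutely_integrable_bounded_measurable_product_real[OF _ _ _ fabs])
      show "g \<in> borel_measurable (lebesgue_on {-pi..pi})"
        by (rule continuous_imp_measurable_on_sets_lebesgue) (use gcont continuous_on_subset in auto)
      show "{-pi..pi} \<in> sets lebesgue" by simp
      show "bounded (g ` {-pi..pi})"
        by (intro compact_imp_bounded compact_continuous_image) (use gcont continuous_on_subset in auto)
    qed
    then show ?thesis using absolutely_integrable_on_def by blast
  qed
  have markov: "\<epsilon> * Tq * measure lebesgue A \<le> I"
  proof -
    have indint: "indicat_real A integrable_on {-pi..pi}"
      unfolding integrable_on_indicator using Alm dpi by (metis A_def Int_absorb2 mem_Collect_eq subsetI subset_trans Collect_subset)
    have "integral {-pi..pi} (indicat_real A) = measure lebesgue (A \<inter> {-pi..pi})"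
      by (rule integral_indicator) (metis Alm Int_absorb2 A_def Collect_subset dpi subset_trans)
    also have "A \<inter> {-pi..pi} = A" using dpi unfolding A_def by auto
    finally have iA: "integral {-pi..pi} (indicat_real A) = measure lebesgue A" .
    have "\<epsilon> * Tq * measure lebesgue A = integral {-pi..pi} (\<lambda>x. (\<epsilon> * Tq) * indicat_real A x)"
      using integral_mult[OF indint, of "\<epsilon> * Tq"] iA by simp
    also have "\<dots> \<le> I" unfolding I_def
    proof (rule integral_le)
      show "(\<lambda>x. \<epsilon> * Tq * indicat_real A x) integrable_on {-pi..pi}"
        using indint by (rule integrable_on_mult_right)
      show "(\<lambda>x. g x * f x) integrable_on {-pi..pi}" by (rule gfint)
      fix x assume x: "x \<in> {-pi..pi}"
      show "\<epsilon> * Tq * indicat_real A x \<le> g x * f x"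
      proof (cases "x \<in> A")
        case True
        then have "\<epsilon> < f x" "Tq < g x" unfolding A_def by auto
        then have "Tq * \<epsilon> \<le> g x * f x" using Tq ep by (intro mult_mono) auto
        then show ?thesis using True by (simp add: mult.commute)
      next
        case False
        have "g x \<ge> 0" unfolding g_def by simp
        then show ?thesis using False nonneg[OF x] by simp
      qed
    qed
    finally show ?thesis .
  qed
  have mA: "measure lebesgue A \<le> \<rho>"
  proof -
    have "\<epsilon> * Tq * measure lebesgue A \<le> \<epsilon> * Tq * \<rho>" using markov I_le by linarith
    then show ?thesis using ep Tq by (simp add: mult_le_cancel_left_pos)
  qed
  have mD: "measure lebesgue D \<le> \<rho>" using rho unfolding D_def .
  define Bs where "Bs = D \<union> A"
  have Bslm: "Bs \<in> lmeasurable" unfolding Bs_def using Alm Dlm by auto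
  have mB: "measure lebesgue Bs \<le> 2 * \<rho>"
    using measure_Un_le[OF Dsets Asets] mA mD unfolding Bs_def by linarith
  define h where "h = \<delta> / (real L + 1)"
  have h: "h > 0" unfolding h_def using dl by simp
  have Lh: "(real L + 1) * h = \<delta>" unfolding h_def by simp
  define ck where "ck k = (real k - real L) * h" for k :: nat
  define cell where "cell k = {ck k - w * h .. ck k + w * h}" for k
  have cell_sub: "cell k \<subseteq> {-\<delta>..\<delta>}" if "k \<le> 2*L" for k
  proof -
    have "\<bar>real k - real L\<bar> \<le> real L" using that by linarith
    then have "\<bar>ck k\<bar> \<le> real L * h" unfolding ck_def using h by (simp add: abs_mult mult_right_mono)
    moreover have "w * h \<le> h" using w h by simp
    ultimately show ?thesis unfolding cell_def using Lh by (auto simp: algebra_simps abs_le_iff)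
  qed
  define M where "M = {k \<in> {0..2*L}. cell k \<inter> E' = {}}"
  define S where "S = {0..2*L} - M"
  have finM: "finite M" unfolding M_def by simp
  have cellB: "cell k \<subseteq> Bs" if "k \<in> M" for k
  proof
    fix x assume x: "x \<in> cell k"
    have k: "k \<le> 2*L" "cell k \<inter> E' = {}" using that unfolding M_def by auto
    have xd: "x \<in> {-\<delta>..\<delta>}" using cell_sub[OF k(1)] x by auto
    have "x \<notin> E'" using k(2) x by auto
    then show "x \<in> Bs" using xd unfolding Bs_def A_def D_def E'_def by auto
  qed
  have disj: "disjoint_family_on cell M"
    unfolding disjoint_family_on_def
  proof (intro ballI impI)
    fix k k' assume kk: "k \<in> M" "k' \<in> M" "k \<noteq> k'"
    have "\<bar>real k - real k'\<bar> \<ge> 1" using kk(3) by linarith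
    then have "\<bar>ck k - ck k'\<bar> \<ge> h"
    proof -
      assume a: "\<bar>real k - real k'\<bar> \<ge> 1"
      have "ck k - ck k' = (real k - real k') * h" unfolding ck_def by (simp add: algebra_simps)
      then have "\<bar>ck k - ck k'\<bar> = \<bar>real k - real k'\<bar> * h" using h by (simp add: abs_mult)
      then show ?thesis using a h mult_right_mono[OF a, of h] by simp
    qed
    moreover have "2 * (w * h) < h" using w h by simp
    ultimately show "cell k \<inter> cell k' = {}" unfolding cell_def by auto
  qed
  have mU: "measure lebesgue (\<Union>k\<in>M. cell k) = real (card M) * (2 * w * h)"
  proof -
    have "measure lebesgue (\<Union>k\<in>M. cell k) = (\<Sum>k\<in>M. measure lebesgue (cell k))"
      by (rule measure_finite_Union[OF finM _ disj]) (auto simp: cell_def emeasure_lborel_Icc_eq)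
    also have "\<dots> = (\<Sum>k\<in>M. 2 * w * h)"
      by (intro sum.cong refl) (use w h in \<open>simp add: cell_def\<close>)
    finally show ?thesis by simp
  qed
  have cM: "real (card M) * (2 * w * h) \<le> 2 * \<rho>"
  proof -
    have "measure lebesgue (\<Union>k\<in>M. cell k) \<le> measure lebesgue Bs"
      by (rule measure_mono_fmeasurable[OF _ _ Bslm]) (use cellB in \<open>auto simp: cell_def\<close>)
    then show ?thesis using mU mB by linarith
  qed
  have cardM: "real (card M) \<le> \<theta> * real L"
  proof -
    have "real (card M) * (w * \<delta>) = real (card M) * (2 * w * h) * (real L + 1) / 2"
      unfolding h_def by (simp add: field_simps)
    also have "\<dots> \<le> 2 * \<rho> * (real L + 1) / 2"
      using cM by (intro divide_right_mono mult_right_mono) auto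
    also have "\<dots> \<le> w * \<delta> * \<theta> * real L" using small by simp
    finally have "real (card M) * (w * \<delta>) \<le> (\<theta> * real L) * (w * \<delta>)" by (simp add: ac_simps)
    then show ?thesis using w dl by (simp add: mult_le_cancel_right_pos)
  qed
  have cardM': "card M \<le> L"
  proof -
    have "\<theta> * real L \<le> real L" using th by (simp add: mult_left_le_one_le)
    then have "real (card M) \<le> real L" using cardM by linarith
    then show ?thesis by simp
  qed
  have Ssub: "S \<subseteq> {0..2*L}" unfolding S_def by auto
  have cardS: "card S = 2*L + 1 - card M"
    unfolding S_def using finM by (subst card_Diff_subset) (auto simp: M_def)
  have degS: "degree q < card S" using cardS cardM' degq by linarith
  have MS: "{0..2*L} - S = M" unfolding S_def M_def by auto
  define y where "y k = (SOME x. x \<in> cell k \<inter> E')" for k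
  have yin: "y k \<in> cell k \<inter> E'" if "k \<in> S" for k
  proof -
    have "cell k \<inter> E' \<noteq> {}" using that unfolding S_def M_def by auto
    then show ?thesis unfolding y_def by (metis ex_in_conv someI)
  qed
  define c where "c = 1 - \<delta>^2/2"
  have "\<delta>^2 \<le> 1" using dl by (simp add: power_le_one)
  then have c: "c > 0" unfolding c_def by simp
  have "cmod (poly q 1) \<le> real (card S) * sqrt Tq * (((1 + w) / (c * (1 - 2*w)))^(2*L)
            * ((6 * real L) ^ card ({0..2*L} - S) / fact (card ({0..2*L} - S))))"
  proof (rule remez_nodes[OF Ssub degS h less_imp_le[OF w(1)] w(2) c])
    fix k assume k: "k \<in> S"
    show "\<bar>y k - (real k - real L) * h\<bar> \<le> w * h"
      using yin[OF k] unfolding cell_def ck_def by auto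
    have yE: "y k \<in> E'" using yin[OF k] by auto
    then have "g (y k) \<le> Tq" unfolding E'_def by auto
    then show "cmod (poly q (cis (y k))) \<le> sqrt Tq" unfolding g_def
      by (metis norm_ge_zero real_le_rsqrt)
  next
    fix j k assume j: "j \<in> S" and k: "k \<in> S"
    have yj: "y j \<in> {-\<delta>..\<delta>}" and yk: "y k \<in> {-\<delta>..\<delta>}" using yin[OF j] yin[OF k] unfolding E'_def by auto
    have d2: "\<bar>y j - y k\<bar> \<le> 2 * \<delta>" using yj yk by auto
    have "\<bar>y j - y k\<bar> \<le> 2 * pi" using d2 dl pi_gt3 by linarith
    then have ge: "cmod (cis (y j) - cis (y k)) \<ge> \<bar>y j - y k\<bar> * (1 - (y j - y k)^2 / 8)"
      by (rule cmod_cis_diff_ge)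
    have "(y j - y k)^2 \<le> (2 * \<delta>)^2"
      using d2 by (metis abs_ge_zero power2_abs power_mono)
    then have "c \<le> 1 - (y j - y k)^2 / 8" unfolding c_def by (simp add: power_mult_distrib)
    then have "c * \<bar>y j - y k\<bar> \<le> \<bar>y j - y k\<bar> * (1 - (y j - y k)^2 / 8)"
      using mult_left_mono[of c "1 - (y j - y k)^2 / 8" "\<bar>y j - y k\<bar>"] by (simp add: mult.commute)
    then show "c * \<bar>y j - y k\<bar> \<le> cmod (cis (y j) - cis (y k))" using ge by linarith
  next
    have c1: "c \<le> 1" unfolding c_def by simp
    have "c * (1 - 2*w) \<le> 1 * 1" using c1 c w by (intro mult_mono) auto
    moreover have "c * (1 - 2*w) > 0" using c w by simp
    ultimately show "(1 + w) / (c * (1 - 2*w)) \<ge> 1" using w by (simp add: le_divide_eq)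
  qed
  also have "\<dots> \<le> (2 * real L + 1) * sqrt Tq * (((1 + w) / (c * (1 - 2*w)))^(2*L)
              * ((6/\<theta>) powr (\<theta> * real L) * exp (\<theta> * real L)))"
  proof (intro mult_mono)
    show "real (card S) \<le> 2 * real L + 1" using cardS by linarith
    show "(6 * real L) ^ card ({0..2*L} - S) / fact (card ({0..2*L} - S))
          \<le> (6/\<theta>) powr (\<theta> * real L) * exp (\<theta> * real L)"
      unfolding MS by (rule comb_exp) (use th cardM in auto)
    have "c * (1 - 2*w) > 0" using c w by simp
    then show "0 \<le> ((1 + w) / (c * (1 - 2*w)))^(2*L)" using w by simp
  qed (use Tq in \<open>auto intro: divide_nonneg_nonneg\<close>)
  finally show ?thesis using q1 unfolding c_def by simp
qed



lemma gf_integrable: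
  fixes f :: "real \<Rightarrow> real" and q :: "complex poly"
  assumes nonneg: "\<And>x. x \<in> {-pi..pi} \<Longrightarrow> f x \<ge> 0"
    and int: "f integrable_on {-pi..pi}"
  shows "(\<lambda>x. (cmod (poly q (cis x)))^2 * f x) integrable_on {-pi..pi}"
proof -
  define g where "g x = (cmod (poly q (cis x)))^2" for x
  have gcont: "continuous_on UNIV g" unfolding g_def cis_conv_exp by (intro continuous_intros)
  have fabs: "f absolutely_integrable_on {-pi..pi}"
    by (rule nonnegative_absolutely_integrable_1[OF int]) (use nonneg in auto)
  have "(\<lambda>x. g x * f x) absolutely_integrable_on {-pi..pi}"
  proof (rule absolutely_integrable_bounded_measurable_product_real[OF _ _ _ fabs])
    show "g \<in> borel_measurable (lebesgue_on {-pi..pi})"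
      by (rule continuous_imp_measurable_on_sets_lebesgue) (use gcont continuous_on_subset in auto)
    show "{-pi..pi} \<in> sets lebesgue" by simp
    show "bounded (g ` {-pi..pi})"
      by (intro compact_imp_bounded compact_continuous_image) (use gcont continuous_on_subset in auto)
  qed
  then show ?thesis using absolutely_integrable_on_def unfolding g_def by blast
qed

lemma gf_nonneg:
  fixes f :: "real \<Rightarrow> real" and q :: "complex poly"
  assumes nonneg: "\<And>x. x \<in> {-pi..pi} \<Longrightarrow> f x \<ge> 0"
    and int: "f integrable_on {-pi..pi}"
  shows "0 \<le> integral {-pi..pi} (\<lambda>x. (cmod (poly q (cis x)))^2 * f x)"
  by (rule integral_nonneg[OF gf_integrable[OF nonneg int]]) (use nonneg in auto)

lemma Iq_lower:
  fixes f :: "real \<Rightarrow> real" and q :: "complex poly"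
  assumes nonneg: "\<And>x. x \<in> {-pi..pi} \<Longrightarrow> f x \<ge> 0"
    and int: "f integrable_on {-pi..pi}"
    and dl: "0 < \<delta>" "\<delta> \<le> 1"
    and w: "0 < w" "w < 1/2"
    and ep: "\<epsilon> > 0"
    and rho: "measure lebesgue {x \<in> {-\<delta>..\<delta>}. f x \<le> \<epsilon>} \<le> \<rho>" and rho0: "\<rho> > 0"
    and L: "L \<ge> 1"
    and degq: "degree q \<le> L" and q1: "poly q 1 = 1"
    and th: "0 < \<theta>" "\<theta> \<le> 1"
    and small: "\<rho> * (real L + 1) \<le> w * \<delta> * \<theta> * real L"
  shows "\<epsilon> * \<rho> / ((2 * real L + 1)^2 * (((1 + w) / ((1 - \<delta>^2/2) * (1 - 2*w)))^(2*L)
              * ((6/\<theta>) powr (\<theta> * real L) * exp (\<theta> * real L)))^2)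
         \<le> integral {-pi..pi} (\<lambda>x. (cmod (poly q (cis x)))^2 * f x)"
  (is "?K \<le> ?I")
proof (rule ccontr)
  assume "\<not> ?K \<le> ?I"
  then have IK: "?I < ?K" by simp
  define \<Lambda> where "\<Lambda> = ((1 + w) / ((1 - \<delta>^2/2) * (1 - 2*w)))^(2*L) * ((6/\<theta>) powr (\<theta> * real L) * exp (\<theta> * real L))"
  have "\<delta>^2 \<le> 1" using dl by (simp add: power_le_one)
  then have c0: "1 - \<delta>^2/2 > 0" by simp
  have \<Lambda>pos: "\<Lambda> > 0" unfolding \<Lambda>_def using c0 w th by (intro mult_pos_pos zero_less_power divide_pos_pos) auto
  have I0: "?I \<ge> 0" by (rule gf_nonneg[OF nonneg int])
  define II where "II = ?I"
  define KK where "KK = ?K"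
  have IK': "II < KK" using IK unfolding II_def KK_def .
  define Tq where "Tq = (II + KK) / (2 * \<epsilon> * \<rho>)"
  have K0: "KK > 0" unfolding KK_def using ep rho0 \<Lambda>pos L unfolding \<Lambda>_def[symmetric] by simp
  have Tq0: "Tq > 0" unfolding Tq_def using I0 K0 ep rho0 unfolding II_def by simp
  have eT: "\<epsilon> * Tq * \<rho> = (II + KK) / 2" unfolding Tq_def using ep rho0 by (simp add: field_simps)
  have "II \<le> \<epsilon> * Tq * \<rho>" unfolding eT using IK' by simp
  then have "?I \<le> \<epsilon> * Tq * \<rho>" unfolding II_def .
  from core[OF nonneg int dl w ep rho L degq q1 th small Tq0 this]
  have one: "1 \<le> (2 * real L + 1) * sqrt Tq * \<Lambda>" unfolding \<Lambda>_def .
  have "1 \<le> ((2 * real L + 1) * sqrt Tq * \<Lambda>)^2"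
    using one by (metis one_le_power)
  also have "\<dots> = (2 * real L + 1)^2 * \<Lambda>^2 * Tq"
    using Tq0 by (simp add: power_mult_distrib)
  also have "\<dots> < (2 * real L + 1)^2 * \<Lambda>^2 * (?K / (\<epsilon> * \<rho>))"
  proof (rule mult_strict_left_mono)
    have "Tq < KK / (\<epsilon> * \<rho>)" unfolding Tq_def using IK' ep rho0 by (simp add: field_simps)
    then show "Tq < ?K / (\<epsilon> * \<rho>)" unfolding KK_def .
    show "0 < (2 * real L + 1)^2 * \<Lambda>^2" using \<Lambda>pos by simp
  qed
  also have "\<dots> = 1" unfolding \<Lambda>_def[symmetric] using ep rho0 \<Lambda>pos by (simp add: field_simps)
  finally show False by simp
qed

lemma one_in_Qn1: "1 \<in> Qn1 n" unfolding Qn1_def by simp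

lemma sigma_sq_bounds:
  fixes f :: "real \<Rightarrow> real"
  assumes nonneg: "\<And>x. x \<in> {-pi..pi} \<Longrightarrow> f x \<ge> 0"
    and int: "f integrable_on {-pi..pi}"
  shows "sigma_sq n f \<le> integral {-pi..pi} f" "0 \<le> sigma_sq n f"
    "\<And>q. q \<in> Qn1 n \<Longrightarrow> sigma_sq n f \<le> integral {-pi..pi} (\<lambda>x. (cmod (poly q (cis x)))^2 * f x)"
proof -
  have bdd: "bdd_below ((\<lambda>q. integral {-pi..pi} (\<lambda>x. (cmod (poly q (cis x)))^2 * f x)) ` Qn1 n)"
    by (rule bdd_belowI[of _ 0]) (use gf_nonneg[OF nonneg int] in auto)
  show le: "sigma_sq n f \<le> integral {-pi..pi} (\<lambda>x. (cmod (poly q (cis x)))^2 * f x)" if "q \<in> Qn1 n" for q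
    unfolding sigma_sq_def by (rule cINF_lower[OF bdd that])
  show "sigma_sq n f \<le> integral {-pi..pi} f" using le[OF one_in_Qn1] by simp
  show "0 \<le> sigma_sq n f" unfolding sigma_sq_def
    by (rule cINF_greatest) (use one_in_Qn1 gf_nonneg[OF nonneg int] in auto)
qed




lemma f_meas:
  fixes f :: "real \<Rightarrow> real"
  assumes int: "f integrable_on {-pi..pi}"
  shows "(\<lambda>x. indicator {-pi..pi} x *\<^sub>R f x) \<in> borel_measurable lebesgue"
  using integrable_imp_measurable[OF int]
  by (subst (asm) borel_measurable_restrict_space_iff) auto

lemma exists_eps:
  fixes f :: "real \<Rightarrow> real"
  assumes int: "f integrable_on {-pi..pi}"
    and d0: "\<delta>0 > 0" and ae: "AE x in lborel. \<bar>x\<bar> < \<delta>0 \<longrightarrow> f x > 0"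
    and dl: "0 < \<delta>" "\<delta> < \<delta>0" "\<delta> \<le> 1" and r: "r > 0"
  shows "\<exists>\<epsilon>>0. measure lebesgue {x \<in> {-\<delta>..\<delta>}. f x \<le> \<epsilon>} \<le> r"
proof -
  define f' where "f' x = indicator {-pi..pi} x *\<^sub>R f x" for x
  have f'meas[measurable]: "f' \<in> borel_measurable lebesgue" unfolding f'_def by (rule f_meas[OF int])
  have dpi: "{-\<delta>..\<delta>} \<subseteq> {-pi..pi}" using dl pi_gt3 by auto
  have f'eq: "f' x = f x" if "x \<in> {-\<delta>..\<delta>}" for x using dpi that unfolding f'_def by auto
  define D where "D k = {x \<in> {-\<delta>..\<delta>}. f x \<le> 1 / real (Suc k)}" for k
  have Deq: "D k = {-\<delta>..\<delta>} \<inter> {x \<in> space lebesgue. f' x \<le> 1 / real (Suc k)}" for k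
    unfolding D_def using f'eq by auto
  have Dsets: "D k \<in> sets lebesgue" for k unfolding Deq by (intro sets.Int) (simp, measurable)
  have dec: "decseq D"
  proof (rule decseq_SucI)
    fix k
    have "1 / real (Suc (Suc k)) \<le> 1 / real (Suc k)" by (simp add: frac_le)
    then show "D (Suc k) \<subseteq> D k" unfolding D_def by auto
  qed
  have fin: "emeasure lebesgue (D k) \<noteq> \<infinity>" for k
  proof -
    have "emeasure lebesgue (D k) \<le> emeasure lebesgue {-\<delta>..\<delta>}"
      by (rule emeasure_mono) (auto simp: D_def)
    also have "\<dots> < \<infinity>" by (simp add: emeasure_lborel_Icc_eq)
    finally show ?thesis by simp
  qed
  have lim: "(\<lambda>k. measure lebesgue (D k)) \<longlonglongrightarrow> measure lebesgue (\<Inter>k. D k)"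
    by (rule Lim_measure_decseq) (use Dsets dec fin in auto)
  have "(\<Inter>k. D k) \<subseteq> {x \<in> {-\<delta>..\<delta>}. \<not> f x > 0}"
  proof
    fix x assume x: "x \<in> (\<Inter>k. D k)"
    then have xd: "x \<in> {-\<delta>..\<delta>}" unfolding D_def by auto
    have "\<not> f x > 0"
    proof
      assume fx: "f x > 0"
      then obtain k where "inverse (real (Suc k)) < f x" using reals_Archimedean by blast
      moreover have "f x \<le> 1 / real (Suc k)" using x unfolding D_def by auto
      ultimately show False by (simp add: inverse_eq_divide)
    qed
    then show "x \<in> {x \<in> {-\<delta>..\<delta>}. \<not> f x > 0}" using xd by auto
  qed
  moreover obtain N where N: "{x \<in> space lborel. \<not> (\<bar>x\<bar> < \<delta>0 \<longrightarrow> f x > 0)} \<subseteq> N" "emeasure lborel N = 0" "N \<in> sets lborel"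
    using ae by (rule AE_E)
  moreover have "{x \<in> {-\<delta>..\<delta>}. \<not> f x > 0} \<subseteq> {x \<in> space lborel. \<not> (\<bar>x\<bar> < \<delta>0 \<longrightarrow> f x > 0)}"
    using dl by auto
  ultimately have sub: "(\<Inter>k. D k) \<subseteq> N" by blast
  have "N \<in> null_sets lebesgue" using N by (intro null_sets_completionI) auto
  then have "(\<Inter>k. D k) \<in> null_sets lebesgue" using sub by (rule null_sets_completion_subset[rotated])
  then have "measure lebesgue (\<Inter>k. D k) = 0" by (simp add: measure_def null_setsD1)
  with lim have "(\<lambda>k. measure lebesgue (D k)) \<longlonglongrightarrow> 0" by simp
  then have "eventually (\<lambda>k. measure lebesgue (D k) < r) sequentially"
    using r by (rule order_tendstoD)
  then obtain k where "measure lebesgue (D k) < r" using eventually_sequentially by auto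
  then show ?thesis unfolding D_def by (intro exI[of _ "1 / real (Suc k)"]) auto
qed

lemma cmod_half_poly:
  "cmod (poly ([:1/2, 1/2:] ^ n) (cis x)) = \<bar>cos (x/2)\<bar> ^ n"
proof -
  have cp: "cis pi = -1" by (simp add: complex_eq_iff)
  have pe: "poly [:1/2, 1/2:] (cis x) = (cis x - cis pi) / 2" by (simp add: cp field_simps)
  have "cmod (poly [:1/2, 1/2:] (cis x)) = cmod ((cis x - cis pi) / 2)" by (simp only: pe)
  also have "\<dots> = cmod (cis x - cis pi) / 2" by (simp add: norm_divide)
  also have "\<dots> = \<bar>sin ((x - pi)/2)\<bar>" unfolding cmod_cis_diff by simp
  also have "sin ((x - pi)/2) = - cos (x/2)" by (simp add: diff_divide_distrib sin_diff)
  finally show ?thesis by (simp add: poly_power norm_power)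
qed



lemma half_in_Qn1: "[:1/2, 1/2:] ^ n \<in> Qn1 n"
proof -
  have "degree ([:1/2, 1/2:] ^ n :: complex poly) \<le> degree ([:1/2, 1/2:] :: complex poly) * n"
    by (rule degree_power_le)
  also have "\<dots> \<le> n" by simp
  finally show ?thesis unfolding Qn1_def by (simp add: poly_power)
qed

lemma part_b:
  fixes f :: "real \<Rightarrow> real"
  assumes nonneg: "\<And>x. x \<in> {-pi..pi} \<Longrightarrow> f x \<ge> 0"
    and int: "f integrable_on {-pi..pi}"
    and pos: "integral {-pi..pi} f > 0"
    and a: "0 < \<alpha>" "\<alpha> < pi" and ae: "AE x in lborel. \<bar>x\<bar> < \<alpha> \<longrightarrow> f x = 0"
  shows "limsup (\<lambda>n. ereal (root n (sigma n f))) \<le> ereal (cos (\<alpha> / 2))"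
proof -
  define F where "F = integral {-pi..pi} f"
  define c where "c = cos (\<alpha>/2)"
  have c0: "c > 0" unfolding c_def using a by (intro cos_gt_zero_pi) auto
  obtain N where N: "{x \<in> space lborel. \<not> (\<bar>x\<bar> < \<alpha> \<longrightarrow> f x = 0)} \<subseteq> N" "emeasure lborel N = 0" "N \<in> sets lborel"
    using ae by (rule AE_E)
  have negN: "negligible N" unfolding negligible_iff_null_sets
    using N by (intro null_sets_completionI) auto
  have Ibound: "integral {-pi..pi} (\<lambda>x. (cmod (poly ([:1/2, 1/2:] ^ n) (cis x)))^2 * f x) \<le> c^(2*n) * F" for n
  proof -
    define h1 where "h1 x = (cmod (poly ([:1/2, 1/2:] ^ n) (cis x)))^2 * f x" for x
    define h1' where "h1' x = (if x \<in> N then 0 else h1 x)" for x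
    have h1int: "h1 integrable_on {-pi..pi}" unfolding h1_def by (rule gf_integrable[OF nonneg int])
    have "integral {-pi..pi} h1 = integral {-pi..pi} h1'"
      by (rule integral_spike[OF negN]) (auto simp: h1'_def)
    also have "\<dots> \<le> integral {-pi..pi} (\<lambda>x. c^(2*n) * f x)"
    proof (rule integral_le)
      show "h1' integrable_on {-pi..pi}"
        by (rule integrable_spike[OF h1int negN]) (auto simp: h1'_def)
      show "(\<lambda>x. c^(2*n) * f x) integrable_on {-pi..pi}" by (rule integrable_on_mult_right[OF int])
      fix x assume x: "x \<in> {-pi..pi}"
      show "h1' x \<le> c^(2*n) * f x"
      proof (cases "x \<in> N")
        case True
        then show ?thesis using nonneg[OF x] c0 by (simp add: h1'_def)
      next
        case False
        then have P: "\<bar>x\<bar> < \<alpha> \<longrightarrow> f x = 0" using N(1) by auto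
        show ?thesis
        proof (cases "\<bar>x\<bar> < \<alpha>")
          case True
          then show ?thesis using P False by (simp add: h1'_def h1_def)
        next
          case ge: False
          have cx: "cos (x/2) = cos (\<bar>x\<bar>/2)" by (cases "x \<ge> 0") auto
          have "cos (\<bar>x\<bar>/2) \<le> c" unfolding c_def
            by (rule cos_monotone_0_pi_le) (use a ge x in auto)
          moreover have "cos (\<bar>x\<bar>/2) \<ge> 0" by (rule cos_ge_zero) (use x in auto)
          ultimately have cb: "\<bar>cos (x/2)\<bar> \<le> c" using cx by simp
          have "(cmod (poly ([:1/2, 1/2:] ^ n) (cis x)))^2 = (\<bar>cos (x/2)\<bar>^2)^n"
            unfolding cmod_half_poly by (metis power_mult mult.commute)
          also have "\<dots> \<le> (c^2)^n" by (intro power_mono) (use cb in \<open>auto intro: power_mono\<close>)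
          finally have "(cmod (poly ([:1/2, 1/2:] ^ n) (cis x)))^2 \<le> c^(2*n)" by (simp add: power_mult)
          then show ?thesis using False nonneg[OF x] unfolding h1'_def h1_def
            by (simp add: mult_right_mono)
        qed
      qed
    qed
    also have "\<dots> = c^(2*n) * F" unfolding F_def using integral_mult[OF int, of "c^(2*n)"] by simp
    finally show ?thesis unfolding h1_def .
  qed
  have F0: "F > 0" using pos unfolding F_def .
  have sig: "sigma n f \<le> c^n * sqrt F" for n
  proof -
    have "sigma_sq n f \<le> c^(2*n) * F"
      using sigma_sq_bounds(3)[OF nonneg int half_in_Qn1] Ibound order_trans unfolding F_def by blast
    then have "sigma n f \<le> sqrt (c^(2*n) * F)" unfolding sigma_def by simp
    also have "\<dots> = c^n * sqrt F"
    proof -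
      have "c^(2*n) = (c^n)^2" by (metis power_mult mult.commute)
      then have "sqrt (c^(2*n)) = c^n" using c0 by simp
      then show ?thesis by (simp add: real_sqrt_mult)
    qed
    finally show ?thesis .
  qed
  have ev: "eventually (\<lambda>n. ereal (root n (sigma n f)) \<le> ereal (c * root n (sqrt F))) sequentially"
  proof (rule eventually_sequentiallyI[of 1])
    fix n :: nat assume n: "n \<ge> 1"
    have "root n (sigma n f) \<le> root n (c^n * sqrt F)" using n sig by (intro real_root_le_mono) auto
    also have "\<dots> = c * root n (sqrt F)" using n c0 by (simp add: real_root_mult real_root_power_cancel)
    finally show "ereal (root n (sigma n f)) \<le> ereal (c * root n (sqrt F))" by simp
  qed
  have lim: "(\<lambda>n. ereal (c * root n (sqrt F))) \<longlonglongrightarrow> ereal c"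
  proof -
    have "(\<lambda>n. c * root n (sqrt F)) \<longlonglongrightarrow> c * 1"
      by (intro tendsto_mult tendsto_const LIMSEQ_root_const) (use F0 in simp)
    then show ?thesis by (intro tendsto_ereal) simp
  qed
  have "limsup (\<lambda>n. ereal (root n (sigma n f))) \<le> limsup (\<lambda>n. ereal (c * root n (sqrt F)))"
    by (rule Limsup_mono[OF ev])
  also have "\<dots> = ereal c" by (rule lim_imp_Limsup[OF _ lim]) simp
  finally show ?thesis unfolding c_def .
qed




definition rr :: "nat \<Rightarrow> real" where
  "rr T = ((1 + 1/real T) / ((1 - (1/real T)^2/2) * (1 - 2/real T)))^2 * root T (6 * real T) * exp (1/real T)"

lemma rr_lim: "rr \<longlonglongrightarrow> 1"
proof -
  have i: "(\<lambda>T. 1 / real T) \<longlonglongrightarrow> 0" by (rule lim_inverse_n')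
  have t1: "(\<lambda>T. 1 + 1/real T) \<longlonglongrightarrow> 1 + 0" by (rule tendsto_add[OF tendsto_const i])
  have t2: "(\<lambda>T. 1 - (1/real T)^2/2) \<longlonglongrightarrow> 1 - 0^2/2"
    by (rule tendsto_diff[OF tendsto_const tendsto_divide[OF tendsto_power[OF i] tendsto_const]]) simp
  have t3': "(\<lambda>T. 2 * (1/real T)) \<longlonglongrightarrow> 2 * 0" by (rule tendsto_mult[OF tendsto_const i])
  have t3: "(\<lambda>T. 1 - 2/real T) \<longlonglongrightarrow> 1 - 2 * 0"
    using tendsto_diff[OF tendsto_const t3', of 1] by simp
  have t23: "(\<lambda>T. (1 - (1/real T)^2/2) * (1 - 2/real T)) \<longlonglongrightarrow> (1 - 0^2/2) * (1 - 2 * 0)"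
    by (rule tendsto_mult[OF t2 t3])
  have a: "(\<lambda>T. ((1 + 1/real T) / ((1 - (1/real T)^2/2) * (1 - 2/real T)))^2) \<longlonglongrightarrow> ((1 + 0) / ((1 - 0^2/2) * (1 - 2*0)))^2"
    by (rule tendsto_power[OF tendsto_divide[OF t1 t23]]) simp
  have r: "(\<lambda>T. root T (6 * real T)) \<longlonglongrightarrow> 1 * 1"
  proof -
    have "(\<lambda>T. root T 6 * root T (real T)) \<longlonglongrightarrow> 1 * 1"
      by (intro tendsto_mult LIMSEQ_root_const LIMSEQ_root) simp
    then show ?thesis by (simp add: real_root_mult)
  qed
  have e: "(\<lambda>T. exp (1 / real T)) \<longlonglongrightarrow> exp 0" by (intro tendsto_intros i)
  have "rr \<longlonglongrightarrow> ((1 + 0) / ((1 - 0^2/2) * (1 - 2*0)))^2 * (1 * 1) * exp 0"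
    unfolding rr_def[abs_def] by (intro tendsto_mult a r e)
  then show ?thesis by simp
qed

lemma lower_T:
  fixes f :: "real \<Rightarrow> real"
  assumes nonneg: "\<And>x. x \<in> {-pi..pi} \<Longrightarrow> f x \<ge> 0"
    and int: "f integrable_on {-pi..pi}"
    and d0: "\<delta>0 > 0" and ae: "AE x in lborel. \<bar>x\<bar> < \<delta>0 \<longrightarrow> f x > 0"
    and T: "T \<ge> 3" "2 \<le> real T * \<delta>0"
  shows "\<exists>C>0. \<forall>n\<ge>1. sigma n f \<ge> C / (3 * real n * rr T ^ n)"
proof -
  define t where "t = real T"
  have t3: "t \<ge> 3" unfolding t_def using T by simp
  define \<delta> where "\<delta> = 1 / t"
  define \<rho> where "\<rho> = 1 / (2 * t^3)"
  have dl: "0 < \<delta>" "\<delta> \<le> 1" unfolding \<delta>_def using t3 by auto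
  have dd0: "\<delta> < \<delta>0"
  proof -
    have "\<delta> \<le> \<delta>0 / 2" unfolding \<delta>_def using T t3 d0 unfolding t_def by (simp add: field_simps)
    then show ?thesis using d0 by simp
  qed
  have rho0: "\<rho> > 0" unfolding \<rho>_def using t3 by simp
  obtain \<epsilon> where ep: "\<epsilon> > 0" and rho: "measure lebesgue {x \<in> {-\<delta>..\<delta>}. f x \<le> \<epsilon>} \<le> \<rho>"
    using exists_eps[OF int d0 ae dl(1) dd0 dl(2) rho0] by blast
  have w: "0 < 1/t" "1/t < 1/2" using t3 by auto
  have th: "0 < 1/t" "1/t \<le> 1" using t3 by auto
  define \<beta> where "\<beta> = (1 + 1/t) / ((1 - \<delta>^2/2) * (1 - 2*(1/t)))"
  have rrT: "rr T = \<beta>^2 * root T (6 * t) * exp (1/t)"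
    unfolding rr_def \<beta>_def \<delta>_def t_def by simp
  have "\<delta>^2 \<le> 1" using dl by (simp add: power_le_one)
  moreover have p1: "0 < 1 + 1/t" using w(1) by linarith
  moreover have p2: "0 < 1 - 2*(1/t)" using w(2) by linarith
  ultimately have \<beta>0: "\<beta> > 0" unfolding \<beta>_def by (intro divide_pos_pos mult_pos_pos) auto
  have "root T (6 * t) > 0" using T t3 by (intro real_root_gt_zero) auto
  then have rr0: "rr T > 0" unfolding rrT using \<beta>0 by simp
  define C where "C = sqrt (\<epsilon> * \<rho>)"
  have C0: "C > 0" unfolding C_def using ep rho0 by simp
  have "\<forall>n\<ge>1. sigma n f \<ge> C / (3 * real n * rr T ^ n)"
  proof (intro allI impI)
    fix n :: nat assume n: "n \<ge> 1"
    define \<Lambda> where "\<Lambda> = \<beta>^(2*n) * ((6/(1/t)) powr ((1/t) * real n) * exp ((1/t) * real n))"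
    have \<Lambda>eq: "\<Lambda> = rr T ^ n"
    proof -
      have "(6/(1/t)) powr ((1/t) * real n) = ((6*t) powr (1/t))^n"
        using t3 by (simp add: powr_power mult.commute)
      also have "(6*t) powr (1/t) = root T (6 * t)"
        using t3 T unfolding t_def by (subst root_powr_inverse) auto
      finally have p: "(6/(1/t)) powr ((1/t) * real n) = root T (6 * t) ^ n" .
      have ex: "exp ((1/t) * real n) = exp (1/t) ^ n"
        by (metis exp_of_nat_mult mult.commute)
      show ?thesis unfolding \<Lambda>_def rrT p ex by (simp add: power_mult power_mult_distrib)
    qed
    have \<Lambda>0: "\<Lambda> > 0" using \<Lambda>eq rr0 by simp
    define K where "K = \<epsilon> * \<rho> / ((2 * real n + 1)^2 * \<Lambda>^2)"
    have small: "\<rho> * (real n + 1) \<le> (1/t) * \<delta> * (1/t) * real n"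
      unfolding \<rho>_def \<delta>_def using n t3 by (simp add: field_simps power3_eq_cube)
    have Kq: "K \<le> integral {-pi..pi} (\<lambda>x. (cmod (poly q (cis x)))^2 * f x)" if q: "q \<in> Qn1 n" for q
    proof -
      have degq: "degree q \<le> n" and q1: "poly q 1 = 1" using q unfolding Qn1_def by auto
      show ?thesis unfolding K_def \<Lambda>_def \<beta>_def
        using Iq_lower[OF nonneg int dl w ep rho rho0 n degq q1 th small] by simp
    qed
    have "K \<le> sigma_sq n f" unfolding sigma_sq_def
      by (rule cINF_greatest) (use one_in_Qn1 Kq in auto)
    then have "sqrt K \<le> sigma n f" unfolding sigma_def by simp
    moreover have "sqrt K = C / ((2 * real n + 1) * \<Lambda>)"
      unfolding K_def C_def using \<Lambda>0 by (simp add: real_sqrt_divide real_sqrt_mult)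
    moreover have "C / (3 * real n * rr T ^ n) \<le> C / ((2 * real n + 1) * \<Lambda>)"
      unfolding \<Lambda>eq[symmetric] using C0 \<Lambda>0 n
      by (intro divide_left_mono mult_right_mono mult_pos_pos) auto
    ultimately show "sigma n f \<ge> C / (3 * real n * rr T ^ n)" by linarith
  qed
  then show ?thesis using C0 by blast
qed



lemma rr_pos:
  assumes T: "T \<ge> 3"
  shows "rr T > 0"
proof -
  have t: "real T \<ge> 3" using T by simp
  have "(1/real T)^2 \<le> 1" using t by (simp add: power_le_one)
  moreover have "0 < 1 + 1/real T" using t by (smt (verit) divide_nonneg_nonneg of_nat_0_le_iff)
  moreover have "0 < 1 - 2/real T" using t by (simp add: field_simps)
  ultimately have b: "(1 + 1/real T) / ((1 - (1/real T)^2/2) * (1 - 2/real T)) > 0"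
    by (intro divide_pos_pos mult_pos_pos) auto
  have "root T (6 * real T) > 0" using T by (intro real_root_gt_zero) auto
  then show ?thesis unfolding rr_def
    using mult_pos_pos[OF mult_pos_pos[OF zero_less_power[OF b, of 2] \<open>root T (6 * real T) > 0\<close>] exp_gt_zero[of "1/real T"]]
    by simp
qed

lemma part_a:
  fixes f :: "real \<Rightarrow> real"
  assumes nonneg: "\<And>x. x \<in> {-pi..pi} \<Longrightarrow> f x \<ge> 0"
    and int: "f integrable_on {-pi..pi}"
    and pos: "integral {-pi..pi} f > 0"
    and d0: "\<delta>0 > 0" and ae: "AE x in lborel. \<bar>x\<bar> < \<delta>0 \<longrightarrow> f x > 0"
  shows "(\<lambda>n. root n (sigma n f)) \<longlonglongrightarrow> 1"
proof (rule order_tendstoI)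
  define F where "F = integral {-pi..pi} f"
  have F0: "F > 0" using pos unfolding F_def .
  fix a :: real assume a: "a > 1"
  have "(\<lambda>n. root n (sqrt F)) \<longlonglongrightarrow> 1" by (rule LIMSEQ_root_const) (use F0 in simp)
  then have ev: "eventually (\<lambda>n. root n (sqrt F) < a) sequentially" using a by (rule order_tendstoD)
  have "eventually (\<lambda>n. root n (sigma n f) \<le> root n (sqrt F)) sequentially"
  proof (rule eventually_sequentiallyI[of 1])
    fix n :: nat assume n: "n \<ge> 1"
    have "sigma n f \<le> sqrt F" unfolding sigma_def F_def using sigma_sq_bounds(1)[OF nonneg int] by simp
    then show "root n (sigma n f) \<le> root n (sqrt F)" using n by (intro real_root_le_mono) auto
  qed
  with ev show "eventually (\<lambda>n. root n (sigma n f) < a) sequentially"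
    by eventually_elim simp
next
  fix a :: real assume a: "a < 1"
  have "(\<lambda>T. inverse (rr T)) \<longlonglongrightarrow> inverse 1" by (intro tendsto_inverse rr_lim) simp
  then have "eventually (\<lambda>T. a < inverse (rr T)) sequentially" using order_tendstoD(1)[of _ "inverse 1" sequentially a] a by simp
  moreover have "eventually (\<lambda>T. T \<ge> 3 \<and> 2 \<le> real T * \<delta>0) sequentially"
  proof -
    obtain N :: nat where N: "real N \<ge> 2 / \<delta>0" using real_arch_simple by blast
    show ?thesis
    proof (rule eventually_sequentiallyI[of "max 3 N"])
      fix T assume T: "max 3 N \<le> T"
      then have "N \<le> T" by simp
      then have "real T \<ge> real N" by simp
      then have "real T \<ge> 2 / \<delta>0" using N by linarith
      then have "2 \<le> real T * \<delta>0" using d0 by (simp add: field_simps)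
      then show "T \<ge> 3 \<and> 2 \<le> real T * \<delta>0" using T by simp
    qed
  qed
  ultimately have "eventually (\<lambda>T. a < inverse (rr T) \<and> T \<ge> 3 \<and> 2 \<le> real T * \<delta>0) sequentially"
    by eventually_elim simp
  then obtain M where M: "\<forall>T\<ge>M. a < inverse (rr T) \<and> T \<ge> 3 \<and> 2 \<le> real T * \<delta>0"
    unfolding eventually_sequentially by blast
  define T where "T = M"
  have T: "a < inverse (rr T)" "T \<ge> 3" "2 \<le> real T * \<delta>0" using M unfolding T_def by auto
  obtain C where C0: "C > 0" and C: "\<And>n. n \<ge> 1 \<Longrightarrow> sigma n f \<ge> C / (3 * real n * rr T ^ n)"
    using lower_T[OF nonneg int d0 ae T(2,3)] by blast
  have rr0: "rr T > 0" by (rule rr_pos[OF T(2)])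
  define l where "l n = root n (C/3) / (root n (real n) * rr T)" for n
  have r1: "(\<lambda>n. root n (C/3)) \<longlonglongrightarrow> 1" by (rule LIMSEQ_root_const) (use C0 in simp)
  have r2: "(\<lambda>n. root n (real n) * rr T) \<longlonglongrightarrow> 1 * rr T" by (rule tendsto_mult[OF LIMSEQ_root tendsto_const])
  have ll: "l \<longlonglongrightarrow> 1 / (1 * rr T)"
    unfolding l_def[abs_def] by (rule tendsto_divide[OF r1 r2]) (use rr0 in simp)
  have "a < 1 / (1 * rr T)" using T(1) by (simp add: inverse_eq_divide)
  then have "eventually (\<lambda>n. a < l n) sequentially" by (rule order_tendstoD(1)[OF ll])
  moreover have "eventually (\<lambda>n. l n \<le> root n (sigma n f)) sequentially"
  proof (rule eventually_sequentiallyI[of 1])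
    fix n :: nat assume n: "n \<ge> 1"
    have "root n (C / (3 * real n * rr T ^ n)) \<le> root n (sigma n f)"
      using C[OF n] n by (intro real_root_le_mono) auto
    moreover have "root n (C / (3 * real n * rr T ^ n)) = l n"
    proof -
      have "C / (3 * real n * rr T ^ n) = (C/3) / (real n * rr T ^ n)" by simp
      then show ?thesis unfolding l_def using n rr0
        by (simp add: real_root_divide real_root_mult real_root_power_cancel)
    qed
    ultimately show "l n \<le> root n (sigma n f)" by simp
  qed
  ultimately show "eventually (\<lambda>n. a < root n (sigma n f)) sequentially"
    by eventually_elim simp
qed

theorem theorem8p2:
  fixes f :: "real \<Rightarrow> real"
  assumes nonneg: "\<And>x. x \<in> {-pi..pi} \<Longrightarrow> f x \<ge> 0"
    and int: "f integrable_on {-pi..pi}"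
    and pos: "integral {-pi..pi} f > 0"
  shows "((\<exists>\<delta>>0. AE x in lborel. \<bar>x\<bar> < \<delta> \<longrightarrow> f x > 0)
            \<longrightarrow> (\<lambda>n. root n (sigma n f)) \<longlonglongrightarrow> 1)
       \<and> (\<forall>\<alpha>. 0 < \<alpha> \<and> \<alpha> < pi \<and> (AE x in lborel. \<bar>x\<bar> < \<alpha> \<longrightarrow> f x = 0)
            \<longrightarrow> limsup (\<lambda>n. ereal (root n (sigma n f))) \<le> ereal (cos (\<alpha> / 2)))"
proof (intro conjI impI allI)
  assume "\<exists>\<delta>>0. AE x in lborel. \<bar>x\<bar> < \<delta> \<longrightarrow> f x > 0"
  then obtain \<delta>0 where "\<delta>0 > 0" "AE x in lborel. \<bar>x\<bar> < \<delta>0 \<longrightarrow> f x > 0" by blast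
  then show "(\<lambda>n. root n (sigma n f)) \<longlonglongrightarrow> 1" using part_a[OF nonneg int pos] by blast
next
  fix \<alpha> assume "0 < \<alpha> \<and> \<alpha> < pi \<and> (AE x in lborel. \<bar>x\<bar> < \<alpha> \<longrightarrow> f x = 0)"
  then show "limsup (\<lambda>n. ereal (root n (sigma n f))) \<le> ereal (cos (\<alpha> / 2))"
    using part_b[OF nonneg int pos] by blast
qed


end
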